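(* Let $g:[1/2,1]\to\mathbb{R}$ be non-decreasing on $[1/2,1]$ with $g(1)\neq g(1/2)$. Then for any $a,b>0$, \[ a\sharp b+\frac{2}{g(1)-g\left(\frac12\right)}\left[\int_{1/2}^{1}g(t)H_t(a,b)\,dt-L(a,b)\int_{1/2}^{1}g(t)\,dt\right]\le a\nabla b . \]
   Context: For $a,b>0$: $a\sharp b=\sqrt{ab}$, $a\nabla b=\frac{a+b}{2}$, $a\sharp_t b=a^{1-t}b^{t}$. The Heinz mean is $H_t(a,b)=\frac{a\sharp_t b+b\sharp_t a}{2}$ for $0\le t\le1$, and the logarithmic mean is $L(a,b)=\frac{b-a}{\ln b-\ln a}$ for $a\neq b$, with the usual convention $L(a,a)=a$. *)

theory Defs
  imports "HOL-Analysis.Analysis"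
begin

definition geo_mean :: "real \<Rightarrow> real \<Rightarrow> real" where
  "geo_mean a b = sqrt (a * b)"

definition arith_mean :: "real \<Rightarrow> real \<Rightarrow> real" where
  "arith_mean a b = (a + b) / 2"

definition wgeo_mean :: "real \<Rightarrow> real \<Rightarrow> real \<Rightarrow> real" where
  "wgeo_mean t a b = a powr (1 - t) * b powr t"

definition heinz_mean :: "real \<Rightarrow> real \<Rightarrow> real \<Rightarrow> real" where
  "heinz_mean t a b = (wgeo_mean t a b + wgeo_mean t b a) / 2"

definition log_mean :: "real \<Rightarrow> real \<Rightarrow> real" where
  "log_mean a b = (if a = b then a else (b - a) / (ln b - ln a))"

end

theory Submission
  imports Defs
begin

lemma wgeo_le: assumes "a > 0" "b > 0" "0 \<le> t" "t \<le> 1"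
  shows "wgeo_mean t a b \<le> (1 - t) * a + t * b"
proof -
  have "exp ((1-t) * ln a + t * ln b) \<le> (1-t) * exp (ln a) + t * exp (ln b)"
    using convex_onD[OF exp_convex, of "1-t" "ln b" "ln a"] assms by (simp add: add_ac)
  thus ?thesis using assms by (simp add: wgeo_mean_def powr_def exp_add mult.commute)
qed

lemma heinz_le: assumes "a > 0" "b > 0" "0 \<le> t" "t \<le> 1"
  shows "heinz_mean t a b \<le> arith_mean a b"
  using wgeo_le[OF assms] wgeo_le[OF assms(2,1,3,4)]
  by (simp add: heinz_mean_def arith_mean_def algebra_simps)

lemma heinz_ge: assumes "a > 0" "b > 0"
  shows "geo_mean a b \<le> heinz_mean t a b"
proof -
  have e1: "a powr (1-t) * a powr t = a" using assms by (simp add: powr_add[symmetric])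
  have e2: "b powr (1-t) * b powr t = b" using assms by (simp add: powr_add[symmetric])
  have "wgeo_mean t a b * wgeo_mean t b a = (a powr (1-t) * a powr t) * (b powr (1-t) * b powr t)"
    by (simp add: wgeo_mean_def mult_ac)
  then have "wgeo_mean t a b * wgeo_mean t b a = a * b" using e1 e2 by simp
  moreover have "wgeo_mean t a b > 0" "wgeo_mean t b a > 0" using assms by (auto simp: wgeo_mean_def)
  ultimately show ?thesis
    using arith_geo_mean_sqrt[of "wgeo_mean t a b" "wgeo_mean t b a"]
    by (simp add: heinz_mean_def geo_mean_def)
qed

lemma heinz_cont: assumes "a > 0" "b > 0"
  shows "continuous_on S (\<lambda>t. heinz_mean t a b)"
  unfolding heinz_mean_def wgeo_mean_def using assms
  by (intro continuous_intros) auto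

lemma heinz_int: assumes "a > 0" "b > 0"
  shows "((\<lambda>t. heinz_mean t a b) has_integral log_mean a b / 2) {1/2..1}"
proof (cases "a = b")
  case True
  have "heinz_mean t a b = a" for t
    using True assms by (simp add: heinz_mean_def wgeo_mean_def powr_add[symmetric])
  then show ?thesis using True has_integral_const_real[of a "1/2" 1]
    by (simp add: log_mean_def)
next
  case False
  define c where "c = ln b - ln a"
  have c: "c \<noteq> 0" using False assms by (simp add: c_def)
  define F where "F t = (a powr (1-t) * b powr t - b powr (1-t) * a powr t) / (2 * c)" for t
  have dw: "((\<lambda>t. x powr (1-t) * y powr t) has_real_derivative x powr (1-t) * y powr t * (ln y - ln x)) (at t)"
    if "x > 0" "y > 0" for x y t
  proof -
    have eq: "(\<lambda>t. x powr (1-t) * y powr t) = (\<lambda>t. exp (ln x + t * (ln y - ln x)))"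
      using that by (auto simp: powr_def exp_add[symmetric] algebra_simps)
    have lin: "((\<lambda>t. ln x + t * (ln y - ln x)) has_real_derivative (ln y - ln x)) (at t)"
      by (rule derivative_eq_intros refl)+ simp
    show ?thesis unfolding eq using DERIV_fun_exp[OF lin] that
      by (simp add: powr_def exp_add[symmetric] algebra_simps)
  qed
  have d: "(F has_vector_derivative heinz_mean t a b) (at t within {1/2..1})" for t
  proof -
    have "(F has_real_derivative
       (a powr (1-t) * b powr t * (ln b - ln a) - b powr (1-t) * a powr t * (ln a - ln b)) / (2 * c)) (at t)"
      unfolding F_def using dw[OF assms(1,2), of t] dw[OF assms(2,1), of t]
      by (intro DERIV_cdivide DERIV_diff) auto
    moreover have "(a powr (1-t) * b powr t * (ln b - ln a) - b powr (1-t) * a powr t * (ln a - ln b)) / (2 * c)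
        = heinz_mean t a b"
    proof -
      have "a powr (1-t) * b powr t * (ln b - ln a) - b powr (1-t) * a powr t * (ln a - ln b)
        = c * (a powr (1-t) * b powr t + b powr (1-t) * a powr t)"
        by (simp add: c_def algebra_simps)
      then show ?thesis using c by (simp add: heinz_mean_def wgeo_mean_def)
    qed
    ultimately show ?thesis
      by (simp add: has_real_derivative_iff_has_vector_derivative[symmetric] has_field_derivative_at_within)
  qed
  have "(b powr (1/2) * a powr (1/2)) = a powr (1/2) * b powr (1/2)" by simp
  then have "F 1 - F (1/2) = log_mean a b / 2"
    using False assms c by (simp add: F_def log_mean_def c_def field_simps)
  moreover have "((\<lambda>t. heinz_mean t a b) has_integral F 1 - F (1/2)) {1/2..1}"
    by (rule fundamental_theorem_of_calculus) (auto intro: d)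
  ultimately show ?thesis by metis
qed

theorem theorem2p3:
  fixes g :: "real \<Rightarrow> real" and a b :: real
  assumes "mono_on {1/2..1} g"
    and "g 1 \<noteq> g (1/2)"
    and "a > 0" and "b > 0"
  shows "geo_mean a b + 2 / (g 1 - g (1/2)) *
           (integral {1/2..1} (\<lambda>t. g t * heinz_mean t a b)
            - log_mean a b * integral {1/2..1} g)
         \<le> arith_mean a b"
proof -
  define h where "h t = heinz_mean t a b" for t
  define A where "A = arith_mean a b"
  define G where "G = geo_mean a b"
  define L where "L = log_mean a b"
  define D where "D = g 1 - g (1/2)"
  have gle: "g (1/2) \<le> g t" "g t \<le> g 1" if "t \<in> {1/2..1}" for t
    using assms(1) that by (auto simp: mono_on_def)
  have D: "D > 0" using gle[of 1] assms(2) by (force simp: D_def)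
  have hA: "h t \<le> A" if "t \<in> {1/2..1}" for t
    using heinz_le[OF assms(3,4)] that by (auto simp: h_def A_def)
  have hG: "G \<le> h t" for t using heinz_ge[OF assms(3,4)] by (simp add: h_def G_def)
  have hi: "(h has_integral L/2) {1/2..1}" using heinz_int[OF assms(3,4)] unfolding h_def[abs_def] L_def by simp
  have gi: "g integrable_on {1/2..1}" using integrable_on_mono_on[OF assms(1)] .
  have "g \<in> borel_measurable (lebesgue_on {1/2..1})"
    using integrable_mono_on[OF assms(1)] by (rule borel_measurable_integrable)
  moreover have "bounded (g ` {1/2..1})"
    by (rule boundedI[where B="\<bar>g (1/2)\<bar> + \<bar>g 1\<bar>"]) (use gle in fastforce)
  moreover have "h absolutely_integrable_on {1/2..1}"
    unfolding h_def by (rule absolutely_integrable_continuous_real, rule heinz_cont[OF assms(3,4)])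
  ultimately have "(\<lambda>t. g t * h t) absolutely_integrable_on {1/2..1}"
    by (intro absolutely_integrable_bounded_measurable_product_real) auto
  then have ghi: "(\<lambda>t. g t * h t) integrable_on {1/2..1}"
    using absolutely_integrable_on_def by blast
  have LA: "L \<le> A"
  proof -
    have "L/2 \<le> A * (1 - 1/2)"
      using has_integral_le[OF hi has_integral_const_real[of A "1/2" 1]] hA
      by simp
    thus ?thesis by simp
  qed
  have GL: "G \<le> L"
  proof -
    have "G * (1 - 1/2) \<le> L/2"
      using has_integral_le[OF has_integral_const_real[of G "1/2" 1] hi] hG
      by simp
    thus ?thesis by simp
  qed
  define k where "k t = (g t - g (1/2)) * (h t - L)" for t
  have kk: "k t = g t * h t - L * g t - g (1/2) * h t + g (1/2) * L" for t
    by (simp add: k_def algebra_simps)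
  have ki: "(k has_integral (integral {1/2..1} (\<lambda>t. g t * h t) - L * integral {1/2..1} g
         - g (1/2) * (L/2) + g (1/2) * L * (1/2))) {1/2..1}"
    unfolding kk
    using has_integral_const_real[of "g (1/2) * L" "1/2::real" 1]
    by (intro has_integral_add has_integral_diff has_integral_mult_right has_integral_mult_left
        integrable_integral ghi gi hi has_integral_const_real[of _ "1/2" 1, simplified]) auto
  have kle: "k t \<le> D * (A - L)" if "t \<in> {1/2..1}" for t
  proof -
    have "k t \<le> (g t - g (1/2)) * (A - L)"
      unfolding k_def using gle[OF that] hA[OF that] by (intro mult_left_mono) auto
    also have "\<dots> \<le> D * (A - L)"
      unfolding D_def using gle[OF that] LA by (intro mult_right_mono) auto
    finally show ?thesis .
  qed
  have "integral {1/2..1} (\<lambda>t. g t * h t) - L * integral {1/2..1} g \<le> D * (A - L) / 2"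
    using has_integral_le[OF ki has_integral_const_real[of "D * (A - L)" "1/2" 1]] kle
    by simp
  then have "2 / D * (integral {1/2..1} (\<lambda>t. g t * h t) - L * integral {1/2..1} g) \<le> A - L"
    using D by (simp add: field_simps)
  then show ?thesis using GL unfolding h_def A_def G_def L_def D_def by linarith
qed

end
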